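(* Let $A\subset\mathbb{Z}$ be an extremal set with cardinality $k$ which is the union of two segments. Then $A$ is Freiman isomorphic of order 2 to one of the following sets: (i) $[0,k+b-1]\setminus[1,b]\subset\mathbb{Z}$ for some $1\le b\le k-3$, with $\dim(A)=1$, $\mathrm{vol}(A)=k+b$ and $|2A|=2k-1+b$; or (ii) $([0,k_1-1]\times\{0\})\cup([0,k_2-1]\times\{1\})\subset\mathbb{Z}^2$ with $k_1+k_2=k$, $k_1,k_2\ge1$, $\dim(A)=2$, $\mathrm{vol}(A)=k$ and $|2A|=3k-3$.
   Context: For integers $x\le y$, $[x,y]=\{n\in\mathbb{Z}:x\le n\le y\}$; $2A=A+A$. Sets $A\subset G$, $B\subset G'$ in abelian groups are Freiman isomorphic of order 2 ($F_2$-isomorphic) if there is a bijection $\phi:A\to B$ with $x+y=z+t\iff\phi(x)+\phi(y)=\phi(z)+\phi(t)$ for all $x,y,z,t\in A$. The dimension $\dim(A)$ is the largest $d$ such that some $B\subset\mathbb{Z}^d$ not contained in a hyperplane is $F_2$-isomorphic to $A$. The volume $\mathrm{vol}(A)$ of a $d$-dimensional set is the minimum of $|\mathrm{conv}(B)\cap\mathbb{Z}^d|$ over $B\subset\mathbb{Z}^d$ $F_2$-isomorphic to $A$. Let $\mathrm{vol}(k,T,d)=\max\{\mathrm{vol}(A):A\subset\mathbb{N},|A|=k,|2A|=T,\dim(A)=d\}$; $A$ is extremal if $\mathrm{vol}(A)=\mathrm{vol}(|A|,|2A|,\dim(A))$. A segment is a nonempty set of consecutive integers; $A\subset\mathbb{Z}$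 is the union of $s$ segments if $A=P_1\cup\dots\cup P_s$ with $P_i$ segments of lengths $k_i$, $\max P_i+1<\min P_{i+1}$ for $1\le i<s$, and $k_i>1$ for some $i$. *)

theory Defs
  imports Complex_Main "HOL-Library.Function_Algebras"
begin

definition sumset :: "'a::ab_group_add set \<Rightarrow> 'a set \<Rightarrow> 'a set" where
  "sumset A B = {a + b | a b. a \<in> A \<and> b \<in> B}"

definition F2_isomorphic :: "'a::ab_group_add set \<Rightarrow> 'b::ab_group_add set \<Rightarrow> bool" where
  "F2_isomorphic A B \<longleftrightarrow> (\<exists>\<phi>. bij_betw \<phi> A B \<and>
     (\<forall>x\<in>A. \<forall>y\<in>A. \<forall>z\<in>A. \<forall>t\<in>A.
        (x + y = z + t \<longleftrightarrow> \<phi> x + \<phi> y = \<phi> z + \<phi> t)))"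

text \<open>The lattice Z^d, encoded as integer functions on nat vanishing from index d on.\<close>
definition lattice :: "nat \<Rightarrow> (nat \<Rightarrow> int) set" where
  "lattice d = {x. \<forall>i\<ge>d. x i = 0}"

definition in_hyperplane :: "nat \<Rightarrow> (nat \<Rightarrow> int) set \<Rightarrow> bool" where
  "in_hyperplane d B \<longleftrightarrow> (\<exists>a::nat \<Rightarrow> real. \<exists>c::real. (\<exists>i<d. a i \<noteq> 0) \<and>
      (\<forall>b\<in>B. (\<Sum>i<d. a i * real_of_int (b i)) = c))"

definition in_conv :: "(nat \<Rightarrow> int) set \<Rightarrow> (nat \<Rightarrow> int) \<Rightarrow> bool" where
  "in_conv B p \<longleftrightarrow> (\<exists>u::(nat \<Rightarrow> int) \<Rightarrow> real. (\<forall>b\<in>B. u b \<ge> 0) \<and> (\<Sum>b\<in>B. u b) = 1 \<and>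
      (\<forall>i. (\<Sum>b\<in>B. u b * real_of_int (b i)) = real_of_int (p i)))"

definition hull_points :: "nat \<Rightarrow> (nat \<Rightarrow> int) set \<Rightarrow> nat" where
  "hull_points d B = card {p \<in> lattice d. in_conv B p}"

definition fdim :: "'a::ab_group_add set \<Rightarrow> nat" where
  "fdim A = (GREATEST d. \<exists>B. B \<subseteq> lattice d \<and> \<not> in_hyperplane d B \<and> F2_isomorphic A B)"

definition fvol :: "'a::ab_group_add set \<Rightarrow> nat" where
  "fvol A = (LEAST v. \<exists>B. B \<subseteq> lattice (fdim A) \<and> F2_isomorphic A B \<and>
                          v = hull_points (fdim A) B)"

definition vol_max :: "nat \<Rightarrow> nat \<Rightarrow> nat \<Rightarrow> nat" where
  "vol_max k T d = Sup {fvol A | A :: int set. A \<subseteq> {0..} \<and> finite A \<and> card A = k \<and>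
                          card (sumset A A) = T \<and> fdim A = d}"

definition extremal :: "int set \<Rightarrow> bool" where
  "extremal A \<longleftrightarrow> fvol A = vol_max (card A) (card (sumset A A)) (fdim A)"

definition union_two_segments :: "int set \<Rightarrow> bool" where
  "union_two_segments A \<longleftrightarrow> (\<exists>a1 b1 a2 b2. A = {a1..b1} \<union> {a2..b2} \<and>
     a1 \<le> b1 \<and> b1 + 1 < a2 \<and> a2 \<le> b2 \<and> (a1 < b1 \<or> a2 < b2))"

definition vec2 :: "int \<Rightarrow> int \<Rightarrow> (nat \<Rightarrow> int)" where
  "vec2 x y = (\<lambda>i. if i = 0 then x else if i = 1 then y else 0)"

end

theory Submission
  imports Defs
begin

lemma F2_sym:
  assumes "F2_isomorphic A B" shows "F2_isomorphic B A"
proof -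
  obtain f where f: "bij_betw f A B" and r: "\<forall>x\<in>A. \<forall>y\<in>A. \<forall>z\<in>A. \<forall>t\<in>A.
        (x + y = z + t \<longleftrightarrow> f x + f y = f z + f t)"
    using assms unfolding F2_isomorphic_def by blast
  let ?g = "inv_into A f"
  have g: "bij_betw ?g B A" using f by (rule bij_betw_inv_into)
  have gi: "\<And>x. x \<in> B \<Longrightarrow> f (?g x) = x" using f by (meson bij_betw_inv_into_right)
  have gA: "\<And>x. x \<in> B \<Longrightarrow> ?g x \<in> A" using g by (meson bij_betwE)
  show ?thesis unfolding F2_isomorphic_def
  proof (intro exI conjI ballI)
    fix x y z t assume "x \<in> B" "y \<in> B" "z \<in> B" "t \<in> B"
    then show "(x + y = z + t) = (?g x + ?g y = ?g z + ?g t)"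
      using r gi gA by metis
  qed (rule g)
qed

lemma F2_trans:
  assumes "F2_isomorphic A B" "F2_isomorphic B C" shows "F2_isomorphic A C"
proof -
  obtain f where f: "bij_betw f A B" and r: "\<forall>x\<in>A. \<forall>y\<in>A. \<forall>z\<in>A. \<forall>t\<in>A.
        (x + y = z + t \<longleftrightarrow> f x + f y = f z + f t)"
    using assms(1) unfolding F2_isomorphic_def by blast
  obtain g where g: "bij_betw g B C" and s: "\<forall>x\<in>B. \<forall>y\<in>B. \<forall>z\<in>B. \<forall>t\<in>B.
        (x + y = z + t \<longleftrightarrow> g x + g y = g z + g t)"
    using assms(2) unfolding F2_isomorphic_def by blast
  have fA: "\<And>x. x \<in> A \<Longrightarrow> f x \<in> B" using f by (meson bij_betwE)
  show ?thesis unfolding F2_isomorphic_def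
  proof (intro exI conjI ballI)
    show "bij_betw (g \<circ> f) A C" using f g by (rule bij_betw_trans)
    fix x y z t assume "x \<in> A" "y \<in> A" "z \<in> A" "t \<in> A"
    then show "(x + y = z + t) = ((g \<circ> f) x + (g \<circ> f) y = (g \<circ> f) z + (g \<circ> f) t)"
      using r s fA by simp
  qed
qed

lemma F2_same:
  assumes "F2_isomorphic A A'"
  shows "fdim A = fdim A'" "fvol A = fvol A'"
proof -
  have e: "\<And>B. F2_isomorphic A B = F2_isomorphic A' B"
    using assms F2_sym F2_trans by metis
  show "fdim A = fdim A'" unfolding fdim_def e ..
  then show "fvol A = fvol A'" unfolding fvol_def e by simp
qed

lemma F2_map:
  fixes f :: "'a::ab_group_add \<Rightarrow> 'b::ab_group_add"
  assumes "inj_on f A" "\<And>x y z t. x\<in>A \<Longrightarrow> y\<in>A \<Longrightarrow> z\<in>A \<Longrightarrow> t\<in>A \<Longrightarrow>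
     (x + y = z + t \<longleftrightarrow> f x + f y = f z + f t)"
  shows "F2_isomorphic A (f ` A)"
  unfolding F2_isomorphic_def using assms by (metis inj_on_imp_bij_betw)

definition ftyp :: "int set \<Rightarrow> (nat \<times> nat \<times> nat \<times> nat) set" where
  "ftyp A = {(i,j,l,m). i < card A \<and> j < card A \<and> l < card A \<and> m < card A \<and>
     sorted_list_of_set A ! i + sorted_list_of_set A ! j = sorted_list_of_set A ! l + sorted_list_of_set A ! m}"

lemma typ_iso:
  assumes "finite A" "finite A'" "card A = card A'" "ftyp A = ftyp A'"
  shows "F2_isomorphic A A'"
proof -
  define xs where "xs = sorted_list_of_set A"
  define ys where "ys = sorted_list_of_set A'"
  have lx: "length xs = card A" and ly: "length ys = card A" using assms xs_def ys_def by auto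
  have bx: "bij_betw ((!) xs) {..<card A} A"
    using bij_betw_nth[of xs] lx assms(1) xs_def by auto
  have by': "bij_betw ((!) ys) {..<card A} A'"
    using bij_betw_nth[of ys] ly assms(2) ys_def by auto
  let ?h = "inv_into {..<card A} ((!) xs)"
  have bh: "bij_betw ?h A {..<card A}" using bx by (rule bij_betw_inv_into)
  have hi: "\<And>x. x \<in> A \<Longrightarrow> xs ! (?h x) = x" using bx by (meson bij_betw_inv_into_right)
  have hA: "\<And>x. x \<in> A \<Longrightarrow> ?h x < card A" using bh by (meson bij_betwE lessThan_iff)
  show ?thesis unfolding F2_isomorphic_def
  proof (intro exI conjI ballI)
    show "bij_betw ((!) ys \<circ> ?h) A A'" using bh by' by (rule bij_betw_trans)
    fix x y z t assume m: "x \<in> A" "y \<in> A" "z \<in> A" "t \<in> A"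
    have "(x + y = z + t) \<longleftrightarrow> (?h x, ?h y, ?h z, ?h t) \<in> ftyp A"
      using m hi hA unfolding ftyp_def xs_def by auto
    also have "\<dots> \<longleftrightarrow> (?h x, ?h y, ?h z, ?h t) \<in> ftyp A'" using assms by simp
    also have "\<dots> \<longleftrightarrow> ys ! ?h x + ys ! ?h y = ys ! ?h z + ys ! ?h t"
      using m hA assms(3) unfolding ftyp_def ys_def by auto
    finally show "(x + y = z + t) = (((!) ys \<circ> ?h) x + ((!) ys \<circ> ?h) y = ((!) ys \<circ> ?h) z + ((!) ys \<circ> ?h) t)"
      by simp
  qed
qed

lemma vol_bdd:
  "bdd_above {fvol A | A :: int set. A \<subseteq> {0..} \<and> finite A \<and> card A = k \<and>
                          card (sumset A A) = T \<and> fdim A = d}"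
proof -
  let ?U = "{..<k} \<times> {..<k} \<times> {..<k} \<times> {..<k}"
  let ?g = "\<lambda>\<tau>. fvol (SOME A :: int set. finite A \<and> card A = k \<and> ftyp A = \<tau>)"
  have "{fvol A | A :: int set. A \<subseteq> {0..} \<and> finite A \<and> card A = k \<and>
                          card (sumset A A) = T \<and> fdim A = d} \<subseteq> ?g ` Pow ?U"
  proof
    fix v assume "v \<in> {fvol A | A :: int set. A \<subseteq> {0..} \<and> finite A \<and> card A = k \<and>
                          card (sumset A A) = T \<and> fdim A = d}"
    then obtain A :: "int set" where A: "finite A" "card A = k" "v = fvol A" by blast
    let ?A = "SOME A' :: int set. finite A' \<and> card A' = k \<and> ftyp A' = ftyp A"
    have "finite ?A \<and> card ?A = k \<and> ftyp ?A = ftyp A"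
      by (rule someI[of _ A]) (use A in auto)
    then have "F2_isomorphic A ?A" using A typ_iso by metis
    then have "v = ?g (ftyp A)" using A F2_same by metis
    moreover have "ftyp A \<in> Pow ?U" using A unfolding ftyp_def by auto
    ultimately show "v \<in> ?g ` Pow ?U" by blast
  qed
  moreover have "finite (?g ` Pow ?U)" by simp
  ultimately show ?thesis by (meson bdd_above_finite bdd_above_mono)
qed

lemma conv_lin:
  assumes "in_conv B p" "\<And>b. b \<in> B \<Longrightarrow> (\<Sum>i\<in>I. c i * real_of_int (b i)) \<le> r"
  shows "(\<Sum>i\<in>I. c i * real_of_int (p i)) \<le> r"
proof -
  obtain u where u0: "\<forall>b\<in>B. u b \<ge> 0" and u1: "(\<Sum>b\<in>B. u b) = 1"
    and up: "\<forall>i. (\<Sum>b\<in>B. u b * real_of_int (b i)) = real_of_int (p i)"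
    using assms(1) unfolding in_conv_def by blast
  have "(\<Sum>i\<in>I. c i * real_of_int (p i)) = (\<Sum>i\<in>I. c i * (\<Sum>b\<in>B. u b * real_of_int (b i)))"
    using up by simp
  also have "\<dots> = (\<Sum>b\<in>B. u b * (\<Sum>i\<in>I. c i * real_of_int (b i)))"
    by (simp add: sum_distrib_left sum.swap[of _ I] algebra_simps)
  also have "\<dots> \<le> (\<Sum>b\<in>B. u b * r)"
    by (rule sum_mono) (use u0 assms(2) in \<open>simp add: mult_left_mono\<close>)
  also have "\<dots> = r" using u1 by (simp add: sum_distrib_right[symmetric])
  finally show ?thesis .
qed

lemma conv_coord:
  assumes "in_conv B p" "\<And>b. b \<in> B \<Longrightarrow> b i \<le> r"
  shows "p i \<le> r"
proof -
  have "(\<Sum>j\<in>{i}. 1 * real_of_int (p j)) \<le> real_of_int r"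
    by (rule conv_lin[OF assms(1)]) (use assms(2) in simp)
  then show ?thesis by simp
qed

lemma conv_coord':
  assumes "in_conv B p" "\<And>b. b \<in> B \<Longrightarrow> r \<le> b i"
  shows "r \<le> p i"
proof -
  have "(\<Sum>j\<in>{i}. (-1) * real_of_int (p j)) \<le> - real_of_int r"
    by (rule conv_lin[OF assms(1)]) (use assms(2) in simp)
  then show ?thesis by simp
qed

lemma in_conv_self:
  assumes "finite B" "b \<in> B" shows "in_conv B b"
  unfolding in_conv_def
  by (rule exI[of _ "\<lambda>c. if c = b then 1 else 0"]) (use assms in \<open>auto simp: if_distrib[of "\<lambda>x. x * _"] cong: if_cong\<close>)

lemma hull_finite:
  assumes "finite B"
  shows "finite {p \<in> lattice d. in_conv B p}"
proof -
  define M where "M = (\<Sum>b\<in>B. \<Sum>i<d. \<bar>b i\<bar>)"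
  have bM: "\<bar>b i\<bar> \<le> M" if "b \<in> B" "i < d" for b i
  proof -
    have "\<bar>b i\<bar> \<le> (\<Sum>i<d. \<bar>b i\<bar>)" using that by (intro member_le_sum) auto
    also have "\<dots> \<le> M" unfolding M_def using that assms
      by (intro member_le_sum) (auto intro: sum_nonneg)
    finally show ?thesis .
  qed
  let ?S = "{p \<in> lattice d. in_conv B p}"
  have "map (\<lambda>i. p i) [0..<d] \<in> {xs. set xs \<subseteq> {-M..M} \<and> length xs = d}" if "p \<in> ?S" for p
  proof -
    have "p i \<le> M" "- M \<le> p i" if "i < d" for i
      using conv_coord[of B p i M] conv_coord'[of B p "-M" i] \<open>p \<in> ?S\<close> bM[OF _ that] by fastforce+
    then show ?thesis by auto
  qed
  then have "(\<lambda>p. map (\<lambda>i. p i) [0..<d]) ` ?S \<subseteq> {xs. set xs \<subseteq> {-M..M} \<and> length xs = d}" by blast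
  then have "finite ((\<lambda>p. map (\<lambda>i. p i) [0..<d]) ` ?S)"
    by (rule finite_subset) (rule finite_lists_length_eq, simp)
  moreover have "inj_on (\<lambda>p. map (\<lambda>i. p i) [0..<d]) ?S"
  proof
    fix p q assume "p \<in> ?S" "q \<in> ?S" and e: "map (\<lambda>i. p i) [0..<d] = map (\<lambda>i. q i) [0..<d]"
    show "p = q"
    proof
      fix i show "p i = q i"
      proof (cases "i < d")
        case True then show ?thesis using e by (metis (no_types, lifting) map_eq_conv atLeastLessThan_iff set_upt zero_le)
      next
        case False then show ?thesis using \<open>p \<in> ?S\<close> \<open>q \<in> ?S\<close> by (simp add: lattice_def)
      qed
    qed
  qed
  ultimately show ?thesis using finite_imageD by blast
qed

lemma hull_ge_card:
  assumes "finite B" "B \<subseteq> lattice d"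
  shows "card B \<le> hull_points d B"
  unfolding hull_points_def
  by (rule card_mono[OF hull_finite[OF assms(1)]]) (use assms in_conv_self in blast)

lemma hull1_lower:
  assumes "finite B" "B \<subseteq> lattice 1" "q \<in> B" "r \<in> B" "q 0 \<le> r 0"
  shows "nat (r 0 - q 0) + 1 \<le> hull_points 1 B"
proof -
  have vq: "q = vec2 (q 0) 0" and vr: "r = vec2 (r 0) 0"
    using assms(2-4) unfolding lattice_def vec2_def by (auto simp: fun_eq_iff)
  have sub: "(\<lambda>z. vec2 z 0) ` {q 0..r 0} \<subseteq> {p \<in> lattice 1. in_conv B p}"
  proof
    fix p assume "p \<in> (\<lambda>z. vec2 z 0) ` {q 0..r 0}"
    then obtain z where z: "q 0 \<le> z" "z \<le> r 0" and p: "p = vec2 z 0" by auto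
    have pl: "p \<in> lattice 1" unfolding p lattice_def vec2_def by auto
    show "p \<in> {p \<in> lattice 1. in_conv B p}"
    proof (cases "q 0 = r 0")
      case True
      then have "p = q" using z p vq by simp
      then show ?thesis using pl in_conv_self assms by blast
    next
      case False
      then have qr: "q \<noteq> r" by auto
      define \<alpha> where "\<alpha> = real_of_int (r 0 - z) / real_of_int (r 0 - q 0)"
      define \<beta> where "\<beta> = real_of_int (z - q 0) / real_of_int (r 0 - q 0)"
      have dpos: "real_of_int (r 0 - q 0) > 0" using False assms(5) by simp
      have ab: "\<alpha> + \<beta> = 1"
      proof -
        have "\<alpha> + \<beta> = real_of_int (r 0 - q 0) / real_of_int (r 0 - q 0)"
          unfolding \<alpha>_def \<beta>_def by (simp add: add_divide_distrib[symmetric])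
        then show ?thesis using dpos by simp
      qed
      have a0: "\<alpha> \<ge> 0" "\<beta> \<ge> 0" unfolding \<alpha>_def \<beta>_def using dpos z by auto
      have c1: "real_of_int (r 0 - z) * q 0 + real_of_int (z - q 0) * r 0 = z * real_of_int (r 0 - q 0)"
        by (simp add: algebra_simps)
      have c0: "\<alpha> * q 0 + \<beta> * r 0 = z"
      proof -
        have "\<alpha> * q 0 + \<beta> * r 0 = (real_of_int (r 0 - z) * q 0 + real_of_int (z - q 0) * r 0) / real_of_int (r 0 - q 0)"
          unfolding \<alpha>_def \<beta>_def by (simp add: add_divide_distrib)
        also have "\<dots> = z" unfolding c1 using dpos by simp
        finally show ?thesis .
      qed
      define u where "u = (\<lambda>c. (if c = q then \<alpha> else 0) + (if c = r then \<beta> else 0))"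
      have su: "(\<Sum>c\<in>B. u c * f c) = \<alpha> * f q + \<beta> * f r" for f :: "(nat \<Rightarrow> int) \<Rightarrow> real"
      proof -
        have "(\<Sum>c\<in>B. u c * f c) = (\<Sum>c\<in>B. (if c = q then \<alpha> * f c else 0) + (if c = r then \<beta> * f c else 0))"
          by (rule sum.cong) (auto simp: u_def distrib_right)
        also have "\<dots> = \<alpha> * f q + \<beta> * f r" using assms(1,3,4) by (simp add: sum.distrib)
        finally show ?thesis .
      qed
      have "in_conv B p" unfolding in_conv_def
      proof (intro exI conjI allI ballI)
        show "0 \<le> u b" for b unfolding u_def using a0 by auto
        show "sum u B = 1" using su[of "\<lambda>_. 1"] ab by simp
        fix i
        have e: "(\<Sum>b\<in>B. u b * real_of_int (b i)) = \<alpha> * q i + \<beta> * r i"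
          using su[of "\<lambda>b. real_of_int (b i)"] by simp
        show "(\<Sum>b\<in>B. u b * real_of_int (b i)) = real_of_int (p i)"
        proof (cases "i = 0")
          case True then show ?thesis using e c0 p by (simp add: vec2_def)
        next
          case False
          then have "q i = 0" "r i = 0" using assms(2-4) by (auto simp: lattice_def)
          then show ?thesis using e p False by (simp add: vec2_def)
        qed
      qed
      then show ?thesis using pl by blast
    qed
  qed
  have "inj_on (\<lambda>z. vec2 z 0) {q 0..r 0}"
  proof (rule inj_onI)
    fix x y assume "vec2 x 0 = vec2 y 0"
    then have "vec2 x 0 0 = vec2 y 0 0" by simp
    then show "x = y" by (simp add: vec2_def)
  qed
  then have "card ((\<lambda>z. vec2 z 0) ` {q 0..r 0}) = card {q 0..r 0}" by (rule card_image)
  moreover have "card ((\<lambda>z. vec2 z 0) ` {q 0..r 0}) \<le> hull_points 1 B" unfolding hull_points_def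
    by (rule card_mono[OF hull_finite[OF assms(1)] sub])
  ultimately have "card {q 0..r 0} \<le> hull_points 1 B" by simp
  then show ?thesis using assms(5) by simp
qed

lemma sum_two:
  fixes d :: nat and f :: "nat \<Rightarrow> real"
  assumes "d \<ge> 2"
  shows "(\<Sum>i<d. (if i = 0 then a0 else if i = 1 then a1 else 0) * f i) = a0 * f 0 + a1 * (f 1 :: real)"
proof -
  have "(\<Sum>i<d. (if i = 0 then a0 else if i = 1 then a1 else 0) * f i)
      = (\<Sum>i\<in>{0,1}. (if i = 0 then a0 else if i = 1 then a1 else 0) * f i)"
    by (rule sum.mono_neutral_right) (use assms in auto)
  then show ?thesis by simp
qed

lemma sum_three:
  fixes d :: nat and f :: "nat \<Rightarrow> real"
  assumes "d \<ge> 3"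
  shows "(\<Sum>i<d. (if i = 0 then a0 else if i = 1 then a1 else if i = 2 then a2 else 0) * f i)
     = a0 * f 0 + a1 * f 1 + a2 * (f 2 :: real)"
proof -
  have "(\<Sum>i<d. (if i = 0 then a0 else if i = 1 then a1 else if i = 2 then a2 else 0) * f i)
      = (\<Sum>i\<in>{0,1,2}. (if i = 0 then a0 else if i = 1 then a1 else if i = 2 then a2 else 0) * f i)"
    by (rule sum.mono_neutral_right) (use assms in auto)
  then show ?thesis by simp
qed

lemma line_hyper:
  fixes d :: nat and B :: "(nat \<Rightarrow> int) set"
  assumes "d \<ge> 2" "\<And>b. b \<in> B \<Longrightarrow> \<exists>s::int. \<forall>i. b i = P i + s * v i"
  shows "in_hyperplane d B"
proof -
  obtain a0 a1 :: int where nz: "a0 \<noteq> 0 \<or> a1 \<noteq> 0" and orth: "a0 * v 0 + a1 * v 1 = 0"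
  proof (cases "v 0 = 0 \<and> v 1 = 0")
    case True then show ?thesis using that[of 1 0] by simp
  next
    case False then show ?thesis using that[of "v 1" "- v 0"] by (auto simp: algebra_simps)
  qed
  let ?a = "\<lambda>i. real_of_int (if i = 0 then a0 else if i = 1 then a1 else 0)"
  show ?thesis unfolding in_hyperplane_def
  proof (intro exI[of _ ?a] exI[of _ "real_of_int (a0 * P 0 + a1 * P 1)"] conjI ballI)
    show "\<exists>i<d. ?a i \<noteq> 0"
    proof -
      have "?a (0::nat) \<noteq> 0 \<or> ?a (1::nat) \<noteq> 0" using nz by simp
      moreover have "(0::nat) < d" "(1::nat) < d" using assms(1) by auto
      ultimately show ?thesis by blast
    qed
    fix b assume "b \<in> B"
    then obtain s where s: "\<And>i. b i = P i + s * v i" using assms(2) by blast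
    have e: "?a i = (if i = 0 then real_of_int a0 else if i = 1 then real_of_int a1 else 0)" for i by simp
    have i0: "(\<Sum>i<d. ?a i * real_of_int (b i)) = real_of_int (a0 * b 0 + a1 * b 1)"
      unfolding e using sum_two[OF assms(1)] by simp
    have i1: "a0 * b 0 + a1 * b 1 = a0 * P 0 + a1 * P 1 + s * (a0 * v 0 + a1 * v 1)" by (simp add: s algebra_simps)
    have i2: "a0 * b 0 + a1 * b 1 = a0 * P 0 + a1 * P 1" using i1 orth by simp
    show "(\<Sum>i<d. ?a i * real_of_int (b i)) = real_of_int (a0 * P 0 + a1 * P 1)" using i0 i2 by metis
  qed
qed

lemma orth3:
  fixes v0 v1 v2 w0 w1 w2 :: int
  obtains a0 a1 a2 where "a0 \<noteq> 0 \<or> a1 \<noteq> 0 \<or> a2 \<noteq> 0"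
    "a0 * v0 + a1 * v1 + a2 * v2 = 0" "a0 * w0 + a1 * w1 + a2 * w2 = 0"
proof -
  let ?c0 = "v1*w2 - v2*w1" and ?c1 = "v2*w0 - v0*w2" and ?c2 = "v0*w1 - v1*w0"
  show ?thesis
  proof (cases "?c0 \<noteq> 0 \<or> ?c1 \<noteq> 0 \<or> ?c2 \<noteq> 0")
    case True then show ?thesis using that[of ?c0 ?c1 ?c2] by (auto simp: algebra_simps)
  next
    case False
    then have z: "?c0 = 0" "?c1 = 0" "?c2 = 0" by auto
    show ?thesis
    proof (cases "v0 \<noteq> 0 \<or> v1 \<noteq> 0")
      case True then show ?thesis using that[of v1 "-v0" 0] z by (auto simp: algebra_simps)
    next
      case F1: False
      show ?thesis
      proof (cases "v2 \<noteq> 0")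
        case True then show ?thesis using that[of v2 0 "-v0"] z F1 by (auto simp: algebra_simps)
      next
        case F2: False
        show ?thesis
        proof (cases "w0 \<noteq> 0 \<or> w1 \<noteq> 0")
          case True then show ?thesis using that[of w1 "-w0" 0] F1 F2 by (auto simp: algebra_simps)
        next
          case F3: False
          show ?thesis
          proof (cases "w2 \<noteq> 0")
            case True then show ?thesis using that[of w2 0 "-w0"] F1 F2 F3 by (auto simp: algebra_simps)
          next
            case False then show ?thesis using that[of 1 0 0] F1 F2 F3 by auto
          qed
        qed
      qed
    qed
  qed
qed

lemma plane_hyper:
  fixes d :: nat and B :: "(nat \<Rightarrow> int) set"
  assumes "d \<ge> 3" "\<And>b. b \<in> B \<Longrightarrow> \<exists>s t::int. \<forall>i. b i = P i + s * v i + t * w i"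
  shows "in_hyperplane d B"
proof -
  obtain a0 a1 a2 where nz: "a0 \<noteq> 0 \<or> a1 \<noteq> 0 \<or> a2 \<noteq> 0"
    and o1: "a0 * v 0 + a1 * v 1 + a2 * v 2 = 0" and o2: "a0 * w 0 + a1 * w 1 + a2 * w 2 = 0"
    using orth3 by blast
  let ?a = "\<lambda>i. real_of_int (if i = 0 then a0 else if i = 1 then a1 else if i = 2 then a2 else 0)"
  show ?thesis unfolding in_hyperplane_def
  proof (intro exI[of _ ?a] exI[of _ "real_of_int (a0 * P 0 + a1 * P 1 + a2 * P 2)"] conjI ballI)
    show "\<exists>i<d. ?a i \<noteq> 0"
    proof -
      have "?a (0::nat) \<noteq> 0 \<or> ?a (1::nat) \<noteq> 0 \<or> ?a (2::nat) \<noteq> 0" using nz by simp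
      moreover have "(0::nat) < d" "(1::nat) < d" "(2::nat) < d" using assms(1) by auto
      ultimately show ?thesis by blast
    qed
    fix b assume "b \<in> B"
    then obtain s t where s: "\<And>i. b i = P i + s * v i + t * w i" using assms(2) by blast
    have e: "?a i = (if i = 0 then real_of_int a0 else if i = 1 then real_of_int a1 else if i = 2 then real_of_int a2 else 0)" for i by simp
    have i0: "(\<Sum>i<d. ?a i * real_of_int (b i)) = real_of_int (a0 * b 0 + a1 * b 1 + a2 * b 2)"
      unfolding e using sum_three[OF assms(1)] by simp
    have i1: "a0 * b 0 + a1 * b 1 + a2 * b 2 = a0 * P 0 + a1 * P 1 + a2 * P 2 + s * (a0 * v 0 + a1 * v 1 + a2 * v 2)
        + t * (a0 * w 0 + a1 * w 1 + a2 * w 2)" by (simp add: s algebra_simps)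
    have i2: "a0 * b 0 + a1 * b 1 + a2 * b 2 = a0 * P 0 + a1 * P 1 + a2 * P 2" using i1 o1 o2 by simp
    show "(\<Sum>i<d. ?a i * real_of_int (b i)) = real_of_int (a0 * P 0 + a1 * P 1 + a2 * P 2)" using i0 i2 by metis
  qed
qed

lemma card_two_seg:
  fixes a1 b1 a2 b2 :: int
  assumes "a1 \<le> b1" "b1 + 1 < a2" "a2 \<le> b2"
  shows "card ({a1..b1} \<union> {a2..b2}) = nat (b1 - a1 + 1) + nat (b2 - a2 + 1)"
  using assms by (subst card_Un_disjoint) auto

lemma sumset_mem:
  fixes a1 b1 a2 b2 :: int
  assumes "a1 \<le> b1" "b1 + 1 < a2" "a2 \<le> b2"
  shows "sumset ({a1..b1} \<union> {a2..b2}) ({a1..b1} \<union> {a2..b2})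
       = {2*a1..2*b2} - ({2*b1+1..a1+a2-1} \<union> {b1+b2+1..2*a2-1})"
proof (rule set_eqI)
  fix s
  let ?A = "{a1..b1} \<union> {a2..b2}"
  show "s \<in> sumset ?A ?A \<longleftrightarrow> s \<in> {2*a1..2*b2} - ({2*b1+1..a1+a2-1} \<union> {b1+b2+1..2*a2-1})"
  proof
    assume "s \<in> sumset ?A ?A"
    then obtain x y where "s = x + y" "x \<in> ?A" "y \<in> ?A" unfolding sumset_def by blast
    then show "s \<in> {2*a1..2*b2} - ({2*b1+1..a1+a2-1} \<union> {b1+b2+1..2*a2-1})"
      using assms by auto
  next
    assume h: "s \<in> {2*a1..2*b2} - ({2*b1+1..a1+a2-1} \<union> {b1+b2+1..2*a2-1})"
    have "\<exists>x\<in>?A. \<exists>y\<in>?A. s = x + y"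
    proof (cases "s \<le> 2*b1")
      case True
      then show ?thesis using h assms
        by (intro bexI[of _ "s div 2"] bexI[of _ "s - s div 2"]) auto
    next
      case F1: False
      show ?thesis
      proof (cases "s \<le> b1 + b2")
        case True
        then have "a1 + a2 \<le> s" using h F1 by auto
        then show ?thesis using h assms True
          by (intro bexI[of _ "max a1 (s - b2)"] bexI[of _ "s - max a1 (s - b2)"]) auto
      next
        case False
        then have "2 * a2 \<le> s" using h F1 by auto
        then show ?thesis using h assms False
          by (intro bexI[of _ "s div 2"] bexI[of _ "s - s div 2"]) auto
      qed
    qed
    then show "s \<in> sumset ?A ?A" unfolding sumset_def by blast
  qed
qed

lemma sumset_card:
  fixes a1 b1 a2 b2 :: int
  assumes "a1 \<le> b1" "b1 + 1 < a2" "a2 \<le> b2"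
  shows "int (card (sumset ({a1..b1} \<union> {a2..b2}) ({a1..b1} \<union> {a2..b2})))
       = 2*(b2-a1)+1 - max 0 (a1+a2-2*b1-1) - max 0 (2*a2-b1-b2-1)"
proof -
  have sub: "{2*b1+1..a1+a2-1} \<union> {b1+b2+1..2*a2-1} \<subseteq> {2*a1..2*b2}" using assms by auto
  have dis: "{2*b1+1..a1+a2-1} \<inter> {b1+b2+1..2*a2-1} = {}" using assms by auto
  have "card ({2*b1+1..a1+a2-1} \<union> {b1+b2+1..2*a2-1}) = card {2*b1+1..a1+a2-1} + card {b1+b2+1..2*a2-1}"
    using dis by (intro card_Un_disjoint) auto
  then have c: "int (card ({2*b1+1..a1+a2-1} \<union> {b1+b2+1..2*a2-1})) = max 0 (a1+a2-2*b1-1) + max 0 (2*a2-b1-b2-1)"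
    by simp
  have "card ({2*a1..2*b2} - ({2*b1+1..a1+a2-1} \<union> {b1+b2+1..2*a2-1}))
      = card {2*a1..2*b2} - card ({2*b1+1..a1+a2-1} \<union> {b1+b2+1..2*a2-1})"
    using sub by (intro card_Diff_subset) (auto intro: finite_subset)
  moreover have "card ({2*b1+1..a1+a2-1} \<union> {b1+b2+1..2*a2-1}) \<le> card {2*a1..2*b2}"
    using sub by (intro card_mono) auto
  ultimately show ?thesis unfolding sumset_mem[OF assms] using c assms by simp
qed

lemma seg_lin:
  fixes \<phi> :: "int \<Rightarrow> nat \<Rightarrow> int"
  assumes "\<And>x. a \<le> x \<Longrightarrow> x < c \<Longrightarrow> \<phi> (x + 1) j = \<phi> x j + v"
  shows "a \<le> x \<Longrightarrow> x \<le> c \<Longrightarrow> \<phi> x j = \<phi> a j + (x - a) * v"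
proof -
  have "\<forall>x. x = a + int n \<longrightarrow> x \<le> c \<longrightarrow> \<phi> x j = \<phi> a j + (x - a) * v" for n
  proof (induction n)
    case 0 then show ?case by simp
  next
    case (Suc n)
    show ?case
    proof (intro allI impI)
      fix x assume x: "x = a + int (Suc n)" "x \<le> c"
      have "\<phi> (a + int n) j = \<phi> a j + int n * v" using Suc x by simp
      moreover have "\<phi> (a + int n + 1) j = \<phi> (a + int n) j + v" using assms x by simp
      ultimately show "\<phi> x j = \<phi> a j + (x - a) * v" using x by (simp add: algebra_simps)
    qed
  qed
  moreover assume "a \<le> x" "x \<le> c"
  ultimately show ?thesis by (metis add.commute diff_add_cancel nonneg_int_cases diff_ge_0_iff_ge)
qed

lemma affine_rel:
  fixes \<phi> :: "int \<Rightarrow> nat \<Rightarrow> int" and a1 b1 a2 b2 :: int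
  assumes s: "a1 \<le> b1" "b1 + 1 < a2" "a2 \<le> b2" "a1 < b1 \<or> a2 < b2"
  and R: "\<And>x y z t. x \<in> {a1..b1} \<union> {a2..b2} \<Longrightarrow> y \<in> {a1..b1} \<union> {a2..b2} \<Longrightarrow>
      z \<in> {a1..b1} \<union> {a2..b2} \<Longrightarrow> t \<in> {a1..b1} \<union> {a2..b2} \<Longrightarrow> x + y = z + t \<Longrightarrow> \<phi> x + \<phi> y = \<phi> z + \<phi> t"
  obtains v where "\<And>x j. x \<in> {a1..b1} \<Longrightarrow> \<phi> x j = \<phi> a1 j + (x - a1) * v j"
                  "\<And>x j. x \<in> {a2..b2} \<Longrightarrow> \<phi> x j = \<phi> a2 j + (x - a2) * v j"
proof -
  define x0 where "x0 = (if a2 < b2 then a2 else a1)"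
  have x0: "x0 \<in> {a1..b1} \<union> {a2..b2}" "x0 + 1 \<in> {a1..b1} \<union> {a2..b2}" using s unfolding x0_def by auto
  define v where "v = (\<lambda>j. \<phi> (x0 + 1) j - \<phi> x0 j)"
  have step: "\<phi> (x + 1) j = \<phi> x j + v j" if "x \<in> {a1..b1} \<union> {a2..b2}" "x + 1 \<in> {a1..b1} \<union> {a2..b2}" for x j
  proof -
    have "\<phi> x + \<phi> (x0 + 1) = \<phi> (x + 1) + \<phi> x0" by (rule R) (use that x0 in auto)
    then have "\<phi> x j + \<phi> (x0 + 1) j = \<phi> (x + 1) j + \<phi> x0 j" by (metis plus_fun_apply)
    then show ?thesis unfolding v_def by simp
  qed
  show ?thesis
  proof (rule that[of v])
    fix x j assume "x \<in> {a1..b1}"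
    then show "\<phi> x j = \<phi> a1 j + (x - a1) * v j"
      using seg_lin[of a1 b1 \<phi> j "v j" x] step by auto
  next
    fix x j assume "x \<in> {a2..b2}"
    then show "\<phi> x j = \<phi> a2 j + (x - a2) * v j"
      using seg_lin[of a2 b2 \<phi> j "v j" x] step by auto
  qed
qed

lemma line_rel:
  fixes \<phi> :: "int \<Rightarrow> nat \<Rightarrow> int" and a1 b1 a2 b2 :: int
  assumes s: "a1 \<le> b1" "b1 + 1 < a2" "a2 \<le> b2" "a1 < b1 \<or> a2 < b2"
  and g: "a2 - b1 - 1 \<le> b1 - a1 - 1 \<or> a2 - b1 - 1 \<le> b2 - a2 - 1"
  and R: "\<And>x y z t. x \<in> {a1..b1} \<union> {a2..b2} \<Longrightarrow> y \<in> {a1..b1} \<union> {a2..b2} \<Longrightarrow>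
      z \<in> {a1..b1} \<union> {a2..b2} \<Longrightarrow> t \<in> {a1..b1} \<union> {a2..b2} \<Longrightarrow> x + y = z + t \<Longrightarrow> \<phi> x + \<phi> y = \<phi> z + \<phi> t"
  obtains v where "\<And>x j. x \<in> {a1..b1} \<union> {a2..b2} \<Longrightarrow> \<phi> x j = \<phi> a1 j + (x - a1) * v j"
proof -
  obtain v where v1: "\<And>x j. x \<in> {a1..b1} \<Longrightarrow> \<phi> x j = \<phi> a1 j + (x - a1) * v j"
                  and v2: "\<And>x j. x \<in> {a2..b2} \<Longrightarrow> \<phi> x j = \<phi> a2 j + (x - a2) * v j"
    using affine_rel[where \<phi>=\<phi>, OF s R] by blast
  have key: "\<phi> a2 j = \<phi> a1 j + (a2 - a1) * v j" for j
  proof (cases "a2 - b1 - 1 \<le> b2 - a2 - 1")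
    case True
    have "\<phi> b1 + \<phi> (2*a2 - b1) = \<phi> a2 + \<phi> a2" by (rule R) (use s True in auto)
    then have "\<phi> b1 j + \<phi> (2*a2 - b1) j = \<phi> a2 j + \<phi> a2 j" by (metis plus_fun_apply)
    moreover have "\<phi> b1 j = \<phi> a1 j + (b1 - a1) * v j" using v1[of b1 j] s by simp
    moreover have "\<phi> (2*a2 - b1) j = \<phi> a2 j + (2*a2 - b1 - a2) * v j" using v2[of "2*a2 - b1" j] s True by simp
    ultimately show ?thesis by (simp add: algebra_simps)
  next
    case False
    then have F: "a2 - b1 - 1 \<le> b1 - a1 - 1" using g by auto
    have "\<phi> a2 + \<phi> (2*b1 - a2) = \<phi> b1 + \<phi> b1" by (rule R) (use s F in auto)
    then have "\<phi> a2 j + \<phi> (2*b1 - a2) j = \<phi> b1 j + \<phi> b1 j" by (metis plus_fun_apply)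
    moreover have "\<phi> b1 j = \<phi> a1 j + (b1 - a1) * v j" using v1[of b1 j] s by simp
    moreover have "\<phi> (2*b1 - a2) j = \<phi> a1 j + (2*b1 - a2 - a1) * v j" using v1[of "2*b1 - a2" j] s F by simp
    ultimately show ?thesis by (simp add: algebra_simps)
  qed
  show ?thesis
  proof (rule that[of v])
    fix x j assume "x \<in> {a1..b1} \<union> {a2..b2}"
    then show "\<phi> x j = \<phi> a1 j + (x - a1) * v j"
    proof
      assume "x \<in> {a1..b1}" then show ?thesis using v1 by blast
    next
      assume "x \<in> {a2..b2}" then show ?thesis using v2[of x j] key[of j] by (simp add: algebra_simps)
    qed
  qed
qed

lemma vec2_add: "vec2 a b + vec2 c d = vec2 (a + c) (b + d)"
  by (simp add: vec2_def fun_eq_iff)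

lemma vec2_eq: "vec2 a b = vec2 c d \<longleftrightarrow> a = c \<and> b = d"
proof
  assume "vec2 a b = vec2 c d"
  then have "vec2 a b 0 = vec2 c d 0" "vec2 a b 1 = vec2 c d 1" by simp_all
  then show "a = c \<and> b = d" by (simp add: vec2_def)
qed simp

lemma vec2_lattice: "vec2 a b \<in> lattice 2" "vec2 a 0 \<in> lattice 1"
  by (auto simp: vec2_def lattice_def)

lemma lattice1_vec2: "p \<in> lattice 1 \<Longrightarrow> p = vec2 (p 0) 0"
  by (auto simp: vec2_def lattice_def fun_eq_iff)

lemma lattice2_vec2: "p \<in> lattice 2 \<Longrightarrow> p = vec2 (p 0) (p 1)"
  by (auto simp: vec2_def lattice_def fun_eq_iff)

lemma F2_rel:
  assumes "F2_isomorphic A B"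
  obtains \<phi> where "bij_betw \<phi> A B"
    "\<And>x y z t. x \<in> A \<Longrightarrow> y \<in> A \<Longrightarrow> z \<in> A \<Longrightarrow> t \<in> A \<Longrightarrow> x + y = z + t \<Longrightarrow> \<phi> x + \<phi> y = \<phi> z + \<phi> t"
  using assms unfolding F2_isomorphic_def by blast

lemma F2_emb1: "F2_isomorphic (A::int set) ((\<lambda>z. vec2 z 0) ` A)"
proof (rule F2_map)
  show "inj_on (\<lambda>z. vec2 z 0) A" by (rule inj_onI) (simp add: vec2_eq)
qed (simp add: vec2_add vec2_eq)

lemma not_hyper1:
  assumes "x \<in> A" "y \<in> A" "x \<noteq> y"
  shows "\<not> in_hyperplane 1 ((\<lambda>z. vec2 z 0) ` A)"
proof
  assume "in_hyperplane 1 ((\<lambda>z. vec2 z 0) ` A)"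
  then obtain a c where a: "a 0 \<noteq> 0" and h: "\<forall>b\<in>(\<lambda>z. vec2 z 0) ` A. (\<Sum>i<1. a i * real_of_int (b i)) = c"
    unfolding in_hyperplane_def by auto
  have "a 0 * x = c" "a 0 * y = c" using h assms by (auto simp: vec2_def)
  then have "a 0 * (x - y) = 0" by (simp add: algebra_simps)
  then show False using a assms by simp
qed

lemma dim1_lower:
  fixes a1 b1 a2 b2 :: int and B :: "(nat \<Rightarrow> int) set"
  assumes s: "a1 \<le> b1" "b1 + 1 < a2" "a2 \<le> b2" "a1 < b1 \<or> a2 < b2"
   and g: "a2 - b1 - 1 \<le> b1 - a1 - 1 \<or> a2 - b1 - 1 \<le> b2 - a2 - 1"
   and B: "B \<subseteq> lattice 1" "F2_isomorphic ({a1..b1} \<union> {a2..b2}) B"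
  shows "nat (b2 - a1 + 1) \<le> hull_points 1 B"
proof -
  let ?A = "{a1..b1} \<union> {a2..b2}"
  obtain \<phi> where bij: "bij_betw \<phi> ?A B" and R: "\<And>x y z t. x \<in> ?A \<Longrightarrow> y \<in> ?A \<Longrightarrow> z \<in> ?A \<Longrightarrow> t \<in> ?A \<Longrightarrow> x + y = z + t \<Longrightarrow> \<phi> x + \<phi> y = \<phi> z + \<phi> t"
    using F2_rel[OF B(2)] by blast
  obtain v where v: "\<And>x j. x \<in> ?A \<Longrightarrow> \<phi> x j = \<phi> a1 j + (x - a1) * v j"
    using line_rel[where \<phi>=\<phi>, OF s g R] by blast
  have fin: "finite B" using bij bij_betw_finite by blast
  have mem: "\<phi> a1 \<in> B" "\<phi> b2 \<in> B" using bij s by (auto dest: bij_betwE)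
  have inj: "inj_on \<phi> ?A" using bij by (rule bij_betw_imp_inj_on)
  have "\<phi> a1 \<noteq> \<phi> b2"
  proof
    assume "\<phi> a1 = \<phi> b2"
    then have "a1 = b2" by (rule inj_onD[OF inj]) (use s in auto)
    then show False using s by simp
  qed
  have l1: "\<phi> a1 = vec2 (\<phi> a1 0) 0" "\<phi> b2 = vec2 (\<phi> b2 0) 0"
    using lattice1_vec2 mem B(1) by blast+
  have v0: "v 0 \<noteq> 0"
  proof
    assume "v 0 = 0"
    then have "\<phi> b2 0 = \<phi> a1 0" using v[of b2 0] s by simp
    then have "\<phi> a1 = \<phi> b2" using l1 by metis
    then show False using \<open>\<phi> a1 \<noteq> \<phi> b2\<close> by simp
  qed
  have d: "\<phi> b2 0 - \<phi> a1 0 = (b2 - a1) * v 0" using v[of b2 0] s by simp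
  have "b2 - a1 \<le> \<bar>\<phi> b2 0 - \<phi> a1 0\<bar>"
  proof -
    have "(b2 - a1) * 1 \<le> (b2 - a1) * \<bar>v 0\<bar>" using v0 s by (intro mult_left_mono) auto
    then show ?thesis unfolding d using s by (simp add: abs_mult)
  qed
  moreover have "nat \<bar>\<phi> b2 0 - \<phi> a1 0\<bar> + 1 \<le> hull_points 1 B"
  proof (cases "\<phi> a1 0 \<le> \<phi> b2 0")
    case True then show ?thesis using hull1_lower[OF fin B(1) mem True] by simp
  next
    case False then show ?thesis using hull1_lower[OF fin B(1) mem(2) mem(1)] by simp
  qed
  ultimately show ?thesis by linarith
qed

lemma dim1:
  fixes a1 b1 a2 b2 :: int
  assumes s: "a1 \<le> b1" "b1 + 1 < a2" "a2 \<le> b2" "a1 < b1 \<or> a2 < b2"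
   and g: "a2 - b1 - 1 \<le> b1 - a1 - 1 \<or> a2 - b1 - 1 \<le> b2 - a2 - 1"
  shows "fdim ({a1..b1} \<union> {a2..b2}) = 1" "fvol ({a1..b1} \<union> {a2..b2}) = nat (b2 - a1 + 1)"
proof -
  let ?A = "{a1..b1} \<union> {a2..b2}"
  let ?B0 = "(\<lambda>z. vec2 z 0) ` ?A"
  have B0l: "?B0 \<subseteq> lattice 1" using vec2_lattice by blast
  have B0i: "F2_isomorphic ?A ?B0" by (rule F2_emb1)
  show fd: "fdim ?A = 1" unfolding fdim_def
  proof (rule Greatest_equality)
    show "\<exists>B\<subseteq>lattice 1. \<not> in_hyperplane 1 B \<and> F2_isomorphic ?A B"
      using B0l B0i not_hyper1[of a1 ?A b2] s by auto
  next
    fix d assume "\<exists>B\<subseteq>lattice d. \<not> in_hyperplane d B \<and> F2_isomorphic ?A B"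
    then obtain B where B: "\<not> in_hyperplane d B" "F2_isomorphic ?A B" by blast
    obtain \<phi> where bij: "bij_betw \<phi> ?A B" and R: "\<And>x y z t. x \<in> ?A \<Longrightarrow> y \<in> ?A \<Longrightarrow> z \<in> ?A \<Longrightarrow> t \<in> ?A \<Longrightarrow> x + y = z + t \<Longrightarrow> \<phi> x + \<phi> y = \<phi> z + \<phi> t"
      using F2_rel[OF B(2)] by blast
    obtain v where v: "\<And>x j. x \<in> ?A \<Longrightarrow> \<phi> x j = \<phi> a1 j + (x - a1) * v j"
      using line_rel[where \<phi>=\<phi>, OF s g R] by blast
    show "d \<le> 1"
    proof (rule ccontr)
      assume "\<not> d \<le> 1"
      then have "in_hyperplane d B"
      proof (intro line_hyper[of d B "\<phi> a1" v])
        fix b assume "b \<in> B"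
        then have "b \<in> \<phi> ` ?A" using bij by (simp add: bij_betw_def)
        then obtain x where "x \<in> ?A" "b = \<phi> x" by blast
        then show "\<exists>s. \<forall>i. b i = \<phi> a1 i + s * v i" using v by blast
      qed simp
      then show False using B by blast
    qed
  qed
  show "fvol ?A = nat (b2 - a1 + 1)" unfolding fvol_def fd
  proof (rule Least_equality)
    have "hull_points 1 ?B0 \<le> nat (b2 - a1 + 1)"
    proof -
      have "{p \<in> lattice 1. in_conv ?B0 p} \<subseteq> (\<lambda>z. vec2 z 0) ` {a1..b2}"
      proof
        fix p assume p: "p \<in> {p \<in> lattice 1. in_conv ?B0 p}"
        have "p 0 \<le> b2" by (rule conv_coord[of ?B0]) (use p s in \<open>auto simp: vec2_def\<close>)
        moreover have "a1 \<le> p 0" by (rule conv_coord'[of ?B0]) (use p s in \<open>auto simp: vec2_def\<close>)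
        ultimately show "p \<in> (\<lambda>z. vec2 z 0) ` {a1..b2}" using lattice1_vec2[of p] p by auto
      qed
      then have "hull_points 1 ?B0 \<le> card ((\<lambda>z. vec2 z 0) ` {a1..b2})"
        unfolding hull_points_def by (intro card_mono) auto
      also have "\<dots> \<le> card {a1..b2}" by (rule card_image_le) simp
      finally show ?thesis by simp
    qed
    moreover have "nat (b2 - a1 + 1) \<le> hull_points 1 ?B0" by (rule dim1_lower[OF s g B0l B0i])
    ultimately show "\<exists>B\<subseteq>lattice 1. F2_isomorphic ?A B \<and> nat (b2 - a1 + 1) = hull_points 1 B"
      using B0l B0i by (intro exI[of _ ?B0]) auto
  next
    fix y assume "\<exists>B\<subseteq>lattice 1. F2_isomorphic ?A B \<and> y = hull_points 1 B"
    then show "nat (b2 - a1 + 1) \<le> y" using dim1_lower[OF s g] by blast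
  qed
qed

lemma key2:
  fixes a1 b1 a2 b2 x y z t :: int
  assumes s: "a1 \<le> b1" "b1 + 1 < a2" "a2 \<le> b2"
   and g: "b1 - a1 \<le> a2 - b1 - 1" "b2 - a2 \<le> a2 - b1 - 1"
   and m: "x \<in> {a1..b1} \<union> {a2..b2}" "y \<in> {a1..b1} \<union> {a2..b2}" "z \<in> {a1..b1} \<union> {a2..b2}" "t \<in> {a1..b1} \<union> {a2..b2}"
  shows "x + y = z + t \<longleftrightarrow>
    ((if x \<le> b1 then x - a1 else x - a2) + (if y \<le> b1 then y - a1 else y - a2)
       = (if z \<le> b1 then z - a1 else z - a2) + (if t \<le> b1 then t - a1 else t - a2) \<and>
     (if x \<le> b1 then 0 else 1) + (if y \<le> b1 then 0 else 1)
       = (if z \<le> b1 then 0 else 1) + (if t \<le> b1 then 0 else (1::int)))"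
  using s g m by (auto split: if_split_asm)

lemma sum_lt2: "(\<Sum>i<(2::nat). f i) = f 0 + f 1"
  by (simp add: numeral_2_eq_2)

lemma dim2:
  fixes a1 b1 a2 b2 :: int and k1 k2 :: nat
  assumes s: "a1 \<le> b1" "b1 + 1 < a2" "a2 \<le> b2" "a1 < b1 \<or> a2 < b2"
   and g: "b1 - a1 \<le> a2 - b1 - 1" "b2 - a2 \<le> a2 - b1 - 1"
   and k: "int k1 = b1 - a1 + 1" "int k2 = b2 - a2 + 1"
  shows "F2_isomorphic ({a1..b1} \<union> {a2..b2}) ({vec2 x 0 | x. 0 \<le> x \<and> x < int k1} \<union> {vec2 x 1 | x. 0 \<le> x \<and> x < int k2})"
    "fdim ({a1..b1} \<union> {a2..b2}) = 2" "fvol ({a1..b1} \<union> {a2..b2}) = k1 + k2"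
proof -
  let ?A = "{a1..b1} \<union> {a2..b2}"
  let ?M = "{vec2 x 0 | x. 0 \<le> x \<and> x < int k1} \<union> {vec2 x 1 | x. 0 \<le> x \<and> x < int k2}"
  define \<psi> where "\<psi> x = vec2 (if x \<le> b1 then x - a1 else x - a2) (if x \<le> b1 then 0 else 1)" for x
  have isoM: "F2_isomorphic ?A (\<psi> ` ?A)"
  proof (rule F2_map)
    show "inj_on \<psi> ?A"
    proof (rule inj_onI)
      fix x y assume "x \<in> ?A" "y \<in> ?A" "\<psi> x = \<psi> y"
      then show "x = y" using s unfolding \<psi>_def vec2_eq by (auto split: if_split_asm)
    qed
  next
    fix x y z t assume m: "x \<in> ?A" "y \<in> ?A" "z \<in> ?A" "t \<in> ?A"
    show "x + y = z + t \<longleftrightarrow> \<psi> x + \<psi> y = \<psi> z + \<psi> t"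
      unfolding \<psi>_def vec2_add vec2_eq using key2[OF s(1-3) g m] by simp
  qed
  have imM: "\<psi> ` ?A = ?M"
  proof
    show "\<psi> ` ?A \<subseteq> ?M"
    proof
      fix p assume "p \<in> \<psi> ` ?A"
      then obtain x where x: "x \<in> ?A" "p = \<psi> x" by blast
      show "p \<in> ?M"
      proof (cases "x \<le> b1")
        case True then show ?thesis using x k s unfolding \<psi>_def by auto
      next
        case False then show ?thesis using x k s unfolding \<psi>_def by auto
      qed
    qed
  next
    show "?M \<subseteq> \<psi> ` ?A"
    proof
      fix p assume "p \<in> ?M"
      then consider x where "p = vec2 x 0" "0 \<le> x" "x < int k1" | x where "p = vec2 x 1" "0 \<le> x" "x < int k2"
        by blast
      then show "p \<in> \<psi> ` ?A"
      proof cases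
        case (1 x)
        have "\<psi> (x + a1) = p" using 1 k unfolding \<psi>_def by auto
        moreover have "x + a1 \<in> ?A" using 1 k by auto
        ultimately show ?thesis by blast
      next
        case (2 x)
        have "\<psi> (x + a2) = p" using 2 k s unfolding \<psi>_def by auto
        moreover have "x + a2 \<in> ?A" using 2 k by auto
        ultimately show ?thesis by blast
      qed
    qed
  qed
  show iso: "F2_isomorphic ?A ?M" using isoM imM by simp
  have Ml: "?M \<subseteq> lattice 2" by (auto simp: vec2_lattice)
  have cA: "card ?A = k1 + k2"
  proof -
    have "nat (b1 - a1 + 1) = k1" "nat (b2 - a2 + 1) = k2" using k by simp_all
    then show ?thesis using card_two_seg[OF s(1-3)] by simp
  qed
  have cM: "card ?M = k1 + k2"
  proof -
    obtain \<phi> where "bij_betw \<phi> ?A ?M" using iso unfolding F2_isomorphic_def by blast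
    then show ?thesis using cA bij_betw_same_card by fastforce
  qed
  have finM: "finite ?M"
  proof -
    have "0 < k1" using k(1) s(1) by linarith
    then have "card ?M \<noteq> 0" using cM by simp
    then show ?thesis by (meson card.infinite)
  qed
  have nh: "\<not> in_hyperplane 2 ?M"
  proof
    assume "in_hyperplane 2 ?M"
    then have "\<exists>a c. (\<exists>i<2. a i \<noteq> (0::real)) \<and> (\<forall>b\<in>?M. (\<Sum>i<2. a i * real_of_int (b i)) = c)"
      by (simp only: in_hyperplane_def)
    then obtain a c where ac: "(\<exists>i<2. a i \<noteq> (0::real)) \<and> (\<forall>b\<in>?M. (\<Sum>i<2. a i * real_of_int (b i)) = c)"
      by (elim exE)
    have a: "\<exists>i<2. a i \<noteq> (0::real)" using ac by (rule conjunct1)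
    have h0: "\<forall>b\<in>?M. (\<Sum>i<2. a i * real_of_int (b i)) = c" using ac by (rule conjunct2)
    have h: "a 0 * real_of_int (b 0) + a 1 * real_of_int (b 1) = c" if "b \<in> ?M" for b
      using h0 that unfolding sum_lt2 by (rule bspec)
    have k1p: "0 < int k1" "0 < int k2" using k s by linarith+
    have m1: "vec2 0 0 \<in> ?M" using k1p(1) by auto
    have m2: "vec2 0 1 \<in> ?M" using k1p(2) by auto
    have c0: "c = 0" using h[OF m1] by (simp add: vec2_def)
    have a1: "a 1 = 0" using h[OF m2] c0 by (simp add: vec2_def)
    have "a 0 = 0"
    proof (cases "a1 < b1")
      case True
      then have "vec2 1 0 \<in> ?M" using k by auto
      then show ?thesis using h[of "vec2 1 0"] c0 a1 by (simp add: vec2_def)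
    next
      case False
      then have "a2 < b2" using s by simp
      then have "vec2 1 1 \<in> ?M" using k by auto
      then show ?thesis using h[of "vec2 1 1"] c0 a1 by (simp add: vec2_def)
    qed
    then show False using a a1 less_2_cases by auto
  qed
  show fd: "fdim ?A = 2" unfolding fdim_def
  proof (rule Greatest_equality)
    show "\<exists>B\<subseteq>lattice 2. \<not> in_hyperplane 2 B \<and> F2_isomorphic ?A B"
      using Ml nh iso by blast
  next
    fix d assume "\<exists>B\<subseteq>lattice d. \<not> in_hyperplane d B \<and> F2_isomorphic ?A B"
    then obtain B where B: "\<not> in_hyperplane d B" "F2_isomorphic ?A B" by blast
    obtain \<phi> where bij: "bij_betw \<phi> ?A B" and R: "\<And>x y z t. x \<in> ?A \<Longrightarrow> y \<in> ?A \<Longrightarrow> z \<in> ?A \<Longrightarrow> t \<in> ?A \<Longrightarrow> x + y = z + t \<Longrightarrow> \<phi> x + \<phi> y = \<phi> z + \<phi> t"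
      using F2_rel[OF B(2)] by blast
    obtain v where v1: "\<And>x j. x \<in> {a1..b1} \<Longrightarrow> \<phi> x j = \<phi> a1 j + (x - a1) * v j"
                  and v2: "\<And>x j. x \<in> {a2..b2} \<Longrightarrow> \<phi> x j = \<phi> a2 j + (x - a2) * v j"
      using affine_rel[where \<phi>=\<phi>, OF s R] by blast
    show "d \<le> 2"
    proof (rule ccontr)
      assume "\<not> d \<le> 2"
      then have "in_hyperplane d B"
      proof (intro plane_hyper[of d B "\<phi> a1" v "\<lambda>j. \<phi> a2 j - \<phi> a1 j"])
        fix b assume "b \<in> B"
        then have "b \<in> \<phi> ` ?A" using bij by (simp add: bij_betw_def)
        then obtain x where x: "x \<in> ?A" "b = \<phi> x" by blast
        show "\<exists>s t. \<forall>i. b i = \<phi> a1 i + s * v i + t * (\<phi> a2 i - \<phi> a1 i)"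
        proof (cases "x \<in> {a1..b1}")
          case True then show ?thesis using v1[of x] x by (intro exI[of _ "x - a1"] exI[of _ 0]) auto
        next
          case False then have "x \<in> {a2..b2}" using x by blast
          then show ?thesis using v2[of x] x by (intro exI[of _ "x - a2"] exI[of _ 1]) auto
        qed
      qed simp
      then show False using B by blast
    qed
  qed
  show "fvol ?A = k1 + k2" unfolding fvol_def fd
  proof (rule Least_equality)
    have "{p \<in> lattice 2. in_conv ?M p} \<subseteq> ?M"
    proof
      fix p assume p: "p \<in> {p \<in> lattice 2. in_conv ?M p}"
      have y1: "p 1 \<le> 1" by (rule conv_coord[of ?M]) (use p in \<open>auto simp: vec2_def\<close>)
      have y0: "0 \<le> p 1" by (rule conv_coord'[of ?M]) (use p in \<open>auto simp: vec2_def\<close>)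
      have x0: "0 \<le> p 0" by (rule conv_coord'[of ?M]) (use p in \<open>auto simp: vec2_def\<close>)
      have "(\<Sum>i\<in>{0,1}. (if i = 0 then 1 else - (real k2 - real k1)) * real_of_int (p i)) \<le> real k1 - 1"
      proof (rule conv_lin[of ?M])
        show "in_conv ?M p" using p by simp
        fix b assume "b \<in> ?M"
        then show "(\<Sum>i\<in>{0::nat,1}. (if i = 0 then 1 else - (real k2 - real k1)) * real_of_int (b i)) \<le> real k1 - 1"
          by (auto simp: vec2_def)
      qed
      then have lin0: "real_of_int (p 0) + (real k1 - real k2) * real_of_int (p 1) \<le> real k1 - 1" by simp
      have "(real k1 - real k2) * real_of_int (p 1) = - ((real k2 - real k1) * real_of_int (p 1))"
        by (simp add: left_diff_distrib)
      then have lin: "real_of_int (p 0) - (real k2 - real k1) * real_of_int (p 1) \<le> real k1 - 1"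
        using lin0 by simp
      have pv: "p = vec2 (p 0) (p 1)" using lattice2_vec2 p by blast
      show "p \<in> ?M"
      proof (cases "p 1 = 0")
        case True
        then have "p 0 < int k1" using lin by simp
        then show ?thesis using pv True x0 by auto
      next
        case False
        then have "p 1 = 1" using y0 y1 by simp
        then have "p 0 < int k2" using lin by simp
        then show ?thesis using pv \<open>p 1 = 1\<close> x0 by auto
      qed
    qed
    then have "hull_points 2 ?M \<le> card ?M" unfolding hull_points_def by (rule card_mono[OF finM])
    then have "hull_points 2 ?M \<le> k1 + k2" using cM by simp
    moreover have "card ?M \<le> hull_points 2 ?M" by (rule hull_ge_card[OF finM Ml])
    ultimately show "\<exists>B\<subseteq>lattice 2. F2_isomorphic ?A B \<and> k1 + k2 = hull_points 2 B"
      using Ml iso cM by (intro exI[of _ ?M]) auto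
  next
    fix y assume "\<exists>B\<subseteq>lattice 2. F2_isomorphic ?A B \<and> y = hull_points 2 B"
    then obtain B where B: "B \<subseteq> lattice 2" "F2_isomorphic ?A B" "y = hull_points 2 B" by blast
    obtain \<phi> where bij: "bij_betw \<phi> ?A B" using B(2) unfolding F2_isomorphic_def by blast
    then have "card B = k1 + k2" "finite B" using cA bij_betw_same_card bij_betw_finite by (metis, blast)
    then show "k1 + k2 \<le> y" using hull_ge_card[of B 2] B by simp
  qed
qed

theorem lemma4p4:
  fixes A :: "int set" and k :: nat
  assumes "finite A" and "card A = k"
    and "extremal A"
    and "union_two_segments A"
  shows "(\<exists>b::nat. 1 \<le> b \<and> b \<le> k - 3 \<and>
            F2_isomorphic A ({0..int (k + b) - 1} - {1..int b}) \<and>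
            fdim A = 1 \<and> fvol A = k + b \<and> card (sumset A A) = 2 * k - 1 + b)
       \<or> (\<exists>k1 k2::nat. k1 + k2 = k \<and> k1 \<ge> 1 \<and> k2 \<ge> 1 \<and>
            F2_isomorphic A ({vec2 x 0 | x. 0 \<le> x \<and> x < int k1} \<union> {vec2 x 1 | x. 0 \<le> x \<and> x < int k2}) \<and>
            fdim A = 2 \<and> fvol A = k \<and> card (sumset A A) = 3 * k - 3)"
proof -
  obtain a1 b1 a2 b2 where A: "A = {a1..b1} \<union> {a2..b2}" and s: "a1 \<le> b1" "b1 + 1 < a2" "a2 \<le> b2"
      "a1 < b1 \<or> a2 < b2"
    using assms(4) unfolding union_two_segments_def by blast
  define bb where "bb = a2 - b1 - 1"
  have bb1: "1 \<le> bb" using s unfolding bb_def by simp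
  have kk: "int k = (b1 - a1 + 1) + (b2 - a2 + 1)"
    using card_two_seg[OF s(1-3)] assms(2) A s by simp
  have T: "int (card (sumset A A)) = 2*(b2-a1)+1 - max 0 (a1+a2-2*b1-1) - max 0 (2*a2-b1-b2-1)"
    using sumset_card[OF s(1-3)] A by simp
  have e1: "b2 - a1 = int k + bb - 1" using kk unfolding bb_def by simp
  consider (two) "bb \<ge> b1 - a1" "bb \<ge> b2 - a2"
    | (l) "a1 = b1" "bb \<le> b2 - a2 - 1"
    | (r) "a2 = b2" "bb \<le> b1 - a1 - 1"
    | (bad) "a1 < b1" "a2 < b2" "bb \<le> b1 - a1 - 1 \<or> bb \<le> b2 - a2 - 1"
    using s by linarith
  then show ?thesis
  proof cases
    case two
    define k1 where "k1 = nat (b1 - a1 + 1)"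
    define k2 where "k2 = nat (b2 - a2 + 1)"
    have k12: "int k1 = b1 - a1 + 1" "int k2 = b2 - a2 + 1" using s unfolding k1_def k2_def by simp_all
    have g: "b1 - a1 \<le> a2 - b1 - 1" "b2 - a2 \<le> a2 - b1 - 1" using two unfolding bb_def by simp_all
    note D = dim2[OF s g k12]
    have "k1 + k2 = k" using kk k12 by simp
    moreover have "int (card (sumset A A)) = 3 * int k - 3" using T kk two unfolding bb_def by simp
    then have "card (sumset A A) = 3 * k - 3" by simp
    ultimately show ?thesis using D k12 s unfolding A[symmetric]
      by (intro disjI2 exI[of _ k1] exI[of _ k2]) auto
  next
    case l
    have g: "a2 - b1 - 1 \<le> b1 - a1 - 1 \<or> a2 - b1 - 1 \<le> b2 - a2 - 1" using l unfolding bb_def by simp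
    note D = dim1[OF s g]
    define b where "b = nat bb"
    have bi: "int b = bb" using bb1 unfolding b_def by simp
    have "F2_isomorphic A ((\<lambda>x. x - a1) ` A)"
      by (rule F2_map) (auto simp: inj_on_def)
    moreover have "(\<lambda>x. x - a1) ` A = {0..int (k + b) - 1} - {1..int b}"
    proof -
      have "(\<lambda>x. x - a1) ` A = {0} \<union> {bb + 1..int k + bb - 1}"
      proof -
        have "(\<lambda>x. x - a1) ` {a2..b2} = {a2 - a1..b2 - a1}" by simp
        then show ?thesis unfolding A using l e1 unfolding bb_def by (auto simp: image_Un)
      qed
      also have "\<dots> = {0..int (k + b) - 1} - {1..int b}" using bi bb1 by auto
      finally show ?thesis .
    qed
    moreover have "fvol A = k + b" using D(2) e1 bi A by simp
    moreover have "card (sumset A A) = 2 * k - 1 + b"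
    proof -
      have "int (card (sumset A A)) = 2 * int k - 1 + bb" using T e1 l s unfolding bb_def by (simp add: max_def)
      then show ?thesis using bi kk s by linarith
    qed
    moreover have "1 \<le> b" "b \<le> k - 3" using bi bb1 kk l unfolding bb_def by linarith+
    ultimately show ?thesis using D(1) A by (intro disjI1 exI[of _ b]) auto
  next
    case r
    have g: "a2 - b1 - 1 \<le> b1 - a1 - 1 \<or> a2 - b1 - 1 \<le> b2 - a2 - 1" using r unfolding bb_def by simp
    note D = dim1[OF s g]
    define b where "b = nat bb"
    have bi: "int b = bb" using bb1 unfolding b_def by simp
    have "F2_isomorphic A ((\<lambda>x. a2 - x) ` A)"
      by (rule F2_map) (auto simp: inj_on_def)
    moreover have "(\<lambda>x. a2 - x) ` A = {0..int (k + b) - 1} - {1..int b}"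
    proof -
      have "(\<lambda>x. a2 - x) ` A = {0} \<union> {bb + 1..int k + bb - 1}"
      proof -
        have "(\<lambda>x. a2 - x) ` {a1..b1} = {a2 - b1..a2 - a1}"
        proof -
          have "(\<lambda>x. a2 - x) ` {a1..b1} = (\<lambda>x. x + a2) ` (uminus ` {a1..b1})" by (auto simp: image_image)
          also have "\<dots> = {a2 - b1..a2 - a1}" by simp
          finally show ?thesis .
        qed
        then show ?thesis unfolding A using r e1 unfolding bb_def by (auto simp: image_Un)
      qed
      also have "\<dots> = {0..int (k + b) - 1} - {1..int b}" using bi bb1 by auto
      finally show ?thesis .
    qed
    moreover have "fvol A = k + b" using D(2) e1 bi A by simp
    moreover have "card (sumset A A) = 2 * k - 1 + b"
    proof -
      have "int (card (sumset A A)) = 2 * int k - 1 + bb" using T e1 r s unfolding bb_def by (simp add: max_def)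
      then show ?thesis using bi kk s by linarith
    qed
    moreover have "1 \<le> b" "b \<le> k - 3" using bi bb1 kk r unfolding bb_def by linarith+
    ultimately show ?thesis using D(1) A by (intro disjI1 exI[of _ b]) auto
  next
    case bad
    have g: "a2 - b1 - 1 \<le> b1 - a1 - 1 \<or> a2 - b1 - 1 \<le> b2 - a2 - 1" using bad unfolding bb_def by simp
    note D = dim1[OF s g]
    define TT where "TT = card (sumset A A)"
    have Tlo: "int TT \<ge> 2 * int k + bb" and Thi: "int TT \<le> 3 * int k - 4"
      using T kk bad s unfolding TT_def bb_def by (auto simp: max_def)
    define b' where "b' = int TT - 2 * int k + 1"
    let ?A' = "{0..0} \<union> {b' + 1..int k + b' - 1}"
    have s': "(0::int) \<le> 0" "0 + 1 < b' + 1" "b' + 1 \<le> int k + b' - 1" "0 < (0::int) \<or> b' + 1 < int k + b' - 1"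
      using Tlo Thi bb1 kk unfolding b'_def by linarith+
    have g': "b' + 1 - 0 - 1 \<le> 0 - 0 - 1 \<or> b' + 1 - 0 - 1 \<le> int k + b' - 1 - (b' + 1) - 1"
      using Thi unfolding b'_def by linarith
    note D' = dim1[OF s' g']
    have cA': "card ?A' = k" using card_two_seg[OF s'(1-3)] kk s by simp
    have TA': "card (sumset ?A' ?A') = TT"
    proof -
      have "int (card (sumset ?A' ?A')) = 2 * (int k + b' - 1 - 0) + 1 - max 0 (0 + (b' + 1) - 2 * 0 - 1)
          - max 0 (2 * (b' + 1) - 0 - (int k + b' - 1) - 1)"
        by (rule sumset_card[OF s'(1-3)])
      also have "\<dots> = int TT" using Thi Tlo bb1 unfolding b'_def by (simp add: max_def)
      finally show ?thesis by simp
    qed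
    have mem: "fvol ?A' \<in> {fvol A | A :: int set. A \<subseteq> {0..} \<and> finite A \<and> card A = k \<and>
                          card (sumset A A) = TT \<and> fdim A = 1}"
    proof -
      have "?A' \<subseteq> {0..}" using s' by auto
      then show ?thesis using cA' TA' D'(1) by blast
    qed
    have "fvol ?A' \<le> vol_max k TT 1" unfolding vol_max_def
      by (rule cSup_upper[OF mem vol_bdd])
    moreover have "fvol A = vol_max k TT 1"
      using assms(3) D(1) assms(2) A unfolding extremal_def TT_def by simp
    moreover have x1: "fvol ?A' = nat (int k + b')" using D'(2) by simp
    moreover have x2: "fvol A = nat (int k + bb)" using D(2) A e1 by simp
    moreover have "int k + bb < int k + b'" using Tlo unfolding b'_def by linarith
    ultimately have False using bb1 by linarith
    then show ?thesis ..
  qed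
qed

end
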